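(* Consider the discrete setting described in the context, with a fixed constant $\rho_\infty^*>0$. For every initial datum $(f^0_{ij},g^0_{ij})_{i\in\mathcal I,j\in\mathcal J}$, the linearized scheme $$\frac{f^{n+1}_{ij}-f^n_{ij}}{\Delta t}+\frac{1}{\Delta x\,\Delta v}\big(\mathcal F^{n+1}_{i+\frac12,j}-\mathcal F^{n+1}_{i-\frac12,j}\big)=-\rho_\infty^*\chi_{1,j}\rho^{n+1}_{g,i}-(\rho_\infty^* )^{-1}f^{n+1}_{ij},$$ $$\frac{g^{n+1}_{ij}-g^n_{ij}}{\Delta t}+\frac{1}{\Delta x\,\Delta v}\big(\mathcal G^{n+1}_{i+\frac12,j}-\mathcal G^{n+1}_{i-\frac12,j}\big)=-(\rho_\infty^* )^{-1}\chi_{2,j}\rho^{n+1}_{f,i}-\rho_\infty^*\,g^{n+1}_{ij}$$ ($n\ge0$, $i\in\mathcal I$, $j\in\mathcal J$) admits a unique solution $(f^n_{ij},g^n_{ij})_{n\ge0,i\in\mathcal I,j\in\mathcal J}$.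
   Context: Space mesh: $N$ uniform cells of length $\Delta x$ of the torus, indexed by $i\in\mathcal I=\mathbb Z/N\mathbb Z$ (periodic). Velocity mesh: $\Delta v=v^*/L$, cells indexed by $j\in\mathcal J=\{-L+1,\dots,L\}$ with midpoints $v_j=(j-\tfrac12)\Delta v$. Time step $\Delta t>0$; $\lambda=\Delta x/(2\Delta t)>0$. For $k=1,2$, $\chi_{k,j}>0$, $\chi_{k,j}=\chi_{k,1-j}$, $\sum_j\Delta v\,\chi_{k,j}=1$. Densities $\rho_{f,i}=\sum_j\Delta v\,f_{ij}$, $\rho_{g,i}=\sum_j\Delta v\,g_{ij}$. Fluxes: $\mathcal F^{n+1}_{i+\frac12,j}=\Delta v\frac{v_j}{2}(f^{n+1}_{i+1,j}+f^{n+1}_{ij})-\Delta v\,\lambda(f^{n+1}_{i+1,j}-f^{n+1}_{ij})$, and $\mathcal G$ the same with $g$ in place of $f$. *)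

theory Defs
  imports Complex_Main
begin

(* Space cells: i \<in> {0..<N}, read modulo N (torus Z/NZ).
   Velocity cells: j \<in> {-L+1..L}. *)

definition Icells :: "nat \<Rightarrow> nat set" where
  "Icells N = {0..<N}"

definition Jcells :: "nat \<Rightarrow> int set" where
  "Jcells L = {- int L + 1 .. int L}"

definition dvel :: "real \<Rightarrow> nat \<Rightarrow> real" where
  "dvel vstar L = vstar / real L"

definition vmid :: "real \<Rightarrow> nat \<Rightarrow> int \<Rightarrow> real" where
  "vmid vstar L j = (real_of_int j - 1/2) * dvel vstar L"

definition lam :: "real \<Rightarrow> real \<Rightarrow> real" where
  "lam dx dt = dx / (2 * dt)"

definition dens :: "real \<Rightarrow> nat \<Rightarrow> (nat \<Rightarrow> int \<Rightarrow> real) \<Rightarrow> nat \<Rightarrow> real" where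
  "dens vstar L h i = (\<Sum>j\<in>Jcells L. dvel vstar L * h i j)"

(* flux at the interface i+1/2 (periodic) *)
definition flux :: "nat \<Rightarrow> nat \<Rightarrow> real \<Rightarrow> real \<Rightarrow> real \<Rightarrow>
    (nat \<Rightarrow> int \<Rightarrow> real) \<Rightarrow> nat \<Rightarrow> int \<Rightarrow> real" where
  "flux N L vstar dx dt h i j =
     dvel vstar L * (vmid vstar L j / 2) * (h ((i + 1) mod N) j + h i j)
     - dvel vstar L * lam dx dt * (h ((i + 1) mod N) j - h i j)"

definition imin :: "nat \<Rightarrow> nat \<Rightarrow> nat" where
  "imin N i = (i + N - 1) mod N"

definition lin_scheme :: "nat \<Rightarrow> nat \<Rightarrow> real \<Rightarrow> real \<Rightarrow> real \<Rightarrow>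
    (int \<Rightarrow> real) \<Rightarrow> (int \<Rightarrow> real) \<Rightarrow> real \<Rightarrow>
    (nat \<Rightarrow> nat \<Rightarrow> int \<Rightarrow> real) \<Rightarrow> (nat \<Rightarrow> nat \<Rightarrow> int \<Rightarrow> real) \<Rightarrow> bool" where
  "lin_scheme N L vstar dx dt chi1 chi2 rs f g \<longleftrightarrow>
    (\<forall>n. \<forall>i\<in>Icells N. \<forall>j\<in>Jcells L.
      (f (Suc n) i j - f n i j) / dt
        + (1 / (dx * dvel vstar L)) *
          (flux N L vstar dx dt (f (Suc n)) i j - flux N L vstar dx dt (f (Suc n)) (imin N i) j)
        = - rs * chi1 j * dens vstar L (g (Suc n)) i - (1 / rs) * f (Suc n) i j
      \<and>
      (g (Suc n) i j - g n i j) / dt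
        + (1 / (dx * dvel vstar L)) *
          (flux N L vstar dx dt (g (Suc n)) i j - flux N L vstar dx dt (g (Suc n)) (imin N i) j)
        = - (1 / rs) * chi2 j * dens vstar L (f (Suc n)) i - rs * g (Suc n) i j)"

end

theory Submission
  imports Defs "HOL-Library.Function_Algebras"
begin

lemma (in vector_space) inj_on_span_imp_surj:
  assumes E: "finite E" and lf: "Vector_Spaces.linear scale scale f"
    and img: "f ` span E \<subseteq> span E" and inj: "inj_on f (span E)"
  shows "span E \<subseteq> f ` span E"
proof -
  interpret p: vector_space_pair scale scale by unfold_locales
  obtain B where B: "B \<subseteq> span E" "independent B" "span E \<subseteq> span B"
    using maximal_independent_subset[of "span E"] by blast
  have fin: "finite B" using independent_span_bound[OF E B(2) B(1)] by blast
  have spB: "span B = span E"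
    using B span_mono[OF B(1)] span_span by (metis subset_antisym)
  have injB: "inj_on f (span B)" using inj spB by simp
  have indf: "independent (f ` B)"
    using p.linear_independent_injective_image[OF lf B(2) injB] .
  have cardf: "card (f ` B) = card B"
    using card_image inj_on_subset[OF injB span_superset] by blast
  have fBsub: "f ` B \<subseteq> span E" using img B(1) span_superset by blast
  have "span E \<subseteq> span (f ` B)"
  proof
    fix a assume a: "a \<in> span E"
    show "a \<in> span (f ` B)"
    proof (rule ccontr)
      assume na: "a \<notin> span (f ` B)"
      then have ind2: "independent (insert a (f ` B))"
        using independent_insertI indf by blast
      have "insert a (f ` B) \<subseteq> span B" using a fBsub spB by blast
      from independent_span_bound[OF fin ind2 this]
      have "card (insert a (f ` B)) \<le> card B" by blast
      moreover have "a \<notin> f ` B" using na span_superset by blast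
      ultimately show False using cardf fin by simp
    qed
  qed
  also have "span (f ` B) = f ` span B" using p.linear_span_image[OF lf] .
  finally show ?thesis using spB by simp
qed

lemma sum_shift_mod:
  fixes \<phi> :: "nat \<Rightarrow> real"
  assumes "N \<ge> 1"
  shows "(\<Sum>i\<in>{0..<N}. \<phi> ((i + 1) mod N)) = (\<Sum>i\<in>{0..<N}. \<phi> i)"
proof -
  obtain m where m: "N = Suc m" using assms by (cases N) auto
  have "(\<Sum>i\<in>{0..<N}. \<phi> ((i + 1) mod N)) = (\<Sum>i<Suc m. \<phi> ((i + 1) mod Suc m))"
    using m atLeast0LessThan by simp
  also have "\<dots> = (\<Sum>i<m. \<phi> ((i + 1) mod Suc m)) + \<phi> 0"
    by simp
  also have "(\<Sum>i<m. \<phi> ((i + 1) mod Suc m)) = (\<Sum>i<m. \<phi> (Suc i))"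
    by (rule sum.cong) auto
  also have "(\<Sum>i<m. \<phi> (Suc i)) + \<phi> 0 = (\<Sum>i<Suc m. \<phi> i)"
    by (subst sum.lessThan_Suc_shift) simp
  finally show ?thesis using m atLeast0LessThan by simp
qed

lemma imin_shift:
  assumes "i < N" shows "imin N ((i + 1) mod N) = i"
proof (cases "i + 1 < N")
  case True
  then have "(i + 1) mod N = i + 1" by simp
  then show ?thesis unfolding imin_def using assms by simp
next
  case False
  then have "i + 1 = N" using assms by simp
  then show ?thesis unfolding imin_def by simp
qed

lemma transport_nonneg:
  fixes h :: "nat \<Rightarrow> int \<Rightarrow> real"
  assumes N: "N \<ge> 1" and dv: "dvel vstar L > 0" and dx: "dx > 0" and dt: "dt > 0"
  shows "(\<Sum>i\<in>Icells N. h i j * (flux N L vstar dx dt h i j - flux N L vstar dx dt h (imin N i) j)) \<ge> 0"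
proof -
  define s where "s i = (i + 1) mod N" for i
  define fl where "fl i = flux N L vstar dx dt h i j" for i
  define a where "a = dvel vstar L * (vmid vstar L j / 2)"
  define b where "b = dvel vstar L * lam dx dt"
  have b: "b \<ge> 0" unfolding b_def lam_def using dv dx dt by simp
  have fl: "fl i = a * (h (s i) j + h i j) - b * (h (s i) j - h i j)" for i
    unfolding fl_def flux_def a_def b_def s_def by simp
  have r1: "(\<Sum>i\<in>{0..<N}. h i j * fl (imin N i)) = (\<Sum>i\<in>{0..<N}. h (s i) j * fl i)"
  proof -
    have "(\<Sum>i\<in>{0..<N}. h i j * fl (imin N i)) = (\<Sum>i\<in>{0..<N}. h (s i) j * fl (imin N (s i)))"
      unfolding s_def using sum_shift_mod[OF N, of "\<lambda>i. h i j * fl (imin N i)"] by simp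
    also have "\<dots> = (\<Sum>i\<in>{0..<N}. h (s i) j * fl i)"
    proof (rule sum.cong)
      fix i assume "i \<in> {0..<N}"
      then have "imin N (s i) = i" unfolding s_def using imin_shift by simp
      then show "h (s i) j * fl (imin N (s i)) = h (s i) j * fl i" by simp
    qed simp
    finally show ?thesis .
  qed
  have r2: "(\<Sum>i\<in>{0..<N}. (h (s i) j)^2) = (\<Sum>i\<in>{0..<N}. (h i j)^2)"
    unfolding s_def using sum_shift_mod[OF N, of "\<lambda>i. (h i j)^2"] by simp
  have "(\<Sum>i\<in>Icells N. h i j * (fl i - fl (imin N i)))
      = (\<Sum>i\<in>{0..<N}. h i j * fl i) - (\<Sum>i\<in>{0..<N}. h (s i) j * fl i)"
    unfolding Icells_def using r1 by (simp add: right_diff_distrib sum_subtractf)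
  also have "\<dots> = (\<Sum>i\<in>{0..<N}. (h i j - h (s i) j) * fl i)"
    by (simp add: left_diff_distrib sum_subtractf)
  also have "\<dots> = (\<Sum>i\<in>{0..<N}. a * ((h i j)^2 - (h (s i) j)^2) + b * (h (s i) j - h i j)^2)"
    by (rule sum.cong) (auto simp: fl power2_eq_square algebra_simps)
  also have "\<dots> = a * ((\<Sum>i\<in>{0..<N}. (h i j)^2) - (\<Sum>i\<in>{0..<N}. (h (s i) j)^2))
      + (\<Sum>i\<in>{0..<N}. b * (h (s i) j - h i j)^2)"
    by (simp add: sum.distrib sum_distrib_left sum_subtractf right_diff_distrib)
  also have "\<dots> = (\<Sum>i\<in>{0..<N}. b * (h (s i) j - h i j)^2)" using r2 by simp
  also have "\<dots> \<ge> 0" using b by (intro sum_nonneg) simp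
  finally show ?thesis unfolding fl_def .
qed

locale schm =
  fixes N L :: nat and vstar dx dt rs :: real and chi1 chi2 :: "int \<Rightarrow> real"
  assumes N1: "N \<ge> 1" and L1: "L \<ge> 1" and vpos: "vstar > 0" and dxpos: "dx > 0"
    and dtpos: "dt > 0" and rspos: "rs > 0"
    and chipos: "\<forall>j\<in>Jcells L. chi1 j > 0 \<and> chi2 j > 0"
    and sum1: "(\<Sum>j\<in>Jcells L. dvel vstar L * chi1 j) = 1"
    and sum2: "(\<Sum>j\<in>Jcells L. dvel vstar L * chi2 j) = 1"
begin

abbreviation "dv \<equiv> dvel vstar L"

definition TT :: "(nat \<Rightarrow> int \<Rightarrow> real) \<Rightarrow> nat \<Rightarrow> int \<Rightarrow> real" where
  "TT h i j = flux N L vstar dx dt h i j - flux N L vstar dx dt h (imin N i) j"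

definition opF :: "(nat \<Rightarrow> int \<Rightarrow> real) \<Rightarrow> (nat \<Rightarrow> int \<Rightarrow> real) \<Rightarrow> nat \<Rightarrow> int \<Rightarrow> real" where
  "opF F G i j = F i j / dt + (1 / (dx * dv)) * TT F i j + rs * chi1 j * dens vstar L G i + F i j / rs"

definition opG :: "(nat \<Rightarrow> int \<Rightarrow> real) \<Rightarrow> (nat \<Rightarrow> int \<Rightarrow> real) \<Rightarrow> nat \<Rightarrow> int \<Rightarrow> real" where
  "opG F G i j = G i j / dt + (1 / (dx * dv)) * TT G i j + (1 / rs) * chi2 j * dens vstar L F i + rs * G i j"

lemma dvpos: "dv > 0"
  unfolding dvel_def using vpos L1 by simp

lemma finJ: "finite (Jcells L)" unfolding Jcells_def by simp
lemma finI: "finite (Icells N)" unfolding Icells_def by simp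

lemma cs:
  fixes F :: "nat \<Rightarrow> int \<Rightarrow> real" and chi :: "int \<Rightarrow> real"
  assumes cp: "\<forall>j\<in>Jcells L. chi j > 0" and s1: "(\<Sum>j\<in>Jcells L. dv * chi j) = 1"
  shows "(dens vstar L F i)^2 \<le> dv * (\<Sum>j\<in>Jcells L. (F i j)^2 / chi j)"
proof -
  define p where "p = dens vstar L F i"
  have p: "p = (\<Sum>j\<in>Jcells L. dv * F i j)" unfolding p_def dens_def ..
  have "0 \<le> (\<Sum>j\<in>Jcells L. dv * chi j * (F i j / chi j - p)^2)"
    using cp dvpos by (intro sum_nonneg) auto
  also have "\<dots> = (\<Sum>j\<in>Jcells L. dv * ((F i j)^2 / chi j) - 2 * p * (dv * F i j) + p^2 * (dv * chi j))"
  proof (rule sum.cong)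
    fix j assume "j \<in> Jcells L"
    then have "chi j \<noteq> 0" using cp by auto
    then show "dv * chi j * (F i j / chi j - p)^2 = dv * ((F i j)^2 / chi j) - 2 * p * (dv * F i j) + p^2 * (dv * chi j)"
      by (simp add: power2_eq_square field_simps)
  qed simp
  also have "\<dots> = (\<Sum>j\<in>Jcells L. dv * ((F i j)^2 / chi j)) - (\<Sum>j\<in>Jcells L. 2 * p * (dv * F i j)) + (\<Sum>j\<in>Jcells L. p^2 * (dv * chi j))"
    by (simp add: sum.distrib sum_subtractf)
  also have "\<dots> = dv * (\<Sum>j\<in>Jcells L. (F i j)^2 / chi j) - 2 * p * p + p^2 * 1"
  proof -
    have h1: "(\<Sum>j\<in>Jcells L. 2 * p * (dv * F i j)) = 2 * p * (\<Sum>j\<in>Jcells L. dv * F i j)"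
      by (rule sum_distrib_left[symmetric])
    have h2: "(\<Sum>j\<in>Jcells L. p^2 * (dv * chi j)) = p^2 * (\<Sum>j\<in>Jcells L. dv * chi j)"
      by (rule sum_distrib_left[symmetric])
    have h3: "(\<Sum>j\<in>Jcells L. dv * ((F i j)^2 / chi j)) = dv * (\<Sum>j\<in>Jcells L. (F i j)^2 / chi j)"
      by (rule sum_distrib_left[symmetric])
    show ?thesis by (simp only: h1 h2 h3 s1 p[symmetric])
  qed
  finally show ?thesis unfolding p_def[symmetric] by (simp add: power2_eq_square)
qed

lemma energy:
  assumes h: "\<forall>i\<in>Icells N. \<forall>j\<in>Jcells L. opF F G i j = 0 \<and> opG F G i j = 0"
  shows "\<forall>i\<in>Icells N. \<forall>j\<in>Jcells L. F i j = 0 \<and> G i j = 0"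
proof -
  let ?I = "Icells N" and ?J = "Jcells L"
  define c where "c = 1 / (dx * dv)"
  have c: "c > 0" unfolding c_def using dxpos dvpos by simp
  define aF where "aF i = (\<Sum>j\<in>?J. (F i j)^2 / chi1 j)" for i
  define bG where "bG i = (\<Sum>j\<in>?J. (G i j)^2 / chi2 j)" for i
  define p where "p i = dens vstar L F i" for i
  define q where "q i = dens vstar L G i" for i
  have sp: "(\<Sum>j\<in>?J. F i j) = p i / dv" for i
    unfolding p_def dens_def using dvpos by (simp add: sum_distrib_left[symmetric])
  have sq: "(\<Sum>j\<in>?J. G i j) = q i / dv" for i
    unfolding q_def dens_def using dvpos by (simp add: sum_distrib_left[symmetric])
  have aF0: "aF i \<ge> 0" for i unfolding aF_def using chipos by (intro sum_nonneg) auto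
  have bG0: "bG i \<ge> 0" for i unfolding bG_def using chipos by (intro sum_nonneg) auto
  define A where "A i j = ((1/dt + 1/rs) / rs) * ((F i j)^2 / chi1 j) + ((1/dt + rs) * rs) * ((G i j)^2 / chi2 j)" for i j
  define B where "B i j = c / (rs * chi1 j) * (F i j * TT F i j) + c * rs / chi2 j * (G i j * TT G i j)" for i j
  define C where "C i j = q i * F i j + p i * G i j" for i j
  have pw: "F i j / (rs * chi1 j) * opF F G i j + rs * G i j / chi2 j * opG F G i j = A i j + B i j + C i j"
    if "j \<in> ?J" for i j
  proof -
    have "chi1 j \<noteq> 0" "chi2 j \<noteq> 0" using chipos that by auto
    then show ?thesis using rspos
      unfolding A_def B_def C_def opF_def opG_def p_def q_def c_def
      by (simp add: power2_eq_square field_simps)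
  qed
  have "0 = (\<Sum>i\<in>?I. \<Sum>j\<in>?J. F i j / (rs * chi1 j) * opF F G i j + rs * G i j / chi2 j * opG F G i j)"
    using h by simp
  also have "\<dots> = (\<Sum>i\<in>?I. \<Sum>j\<in>?J. A i j + B i j + C i j)"
    using pw by simp
  also have "\<dots> = (\<Sum>i\<in>?I. (\<Sum>j\<in>?J. A i j) + (\<Sum>j\<in>?J. C i j)) + (\<Sum>i\<in>?I. \<Sum>j\<in>?J. B i j)"
    by (simp add: sum.distrib)
  finally have tot: "0 = (\<Sum>i\<in>?I. (\<Sum>j\<in>?J. A i j) + (\<Sum>j\<in>?J. C i j)) + (\<Sum>i\<in>?I. \<Sum>j\<in>?J. B i j)" .
  have Bnn: "(\<Sum>i\<in>?I. \<Sum>j\<in>?J. B i j) \<ge> 0"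
  proof -
    have "(\<Sum>i\<in>?I. \<Sum>j\<in>?J. B i j) = (\<Sum>j\<in>?J. \<Sum>i\<in>?I. B i j)" by (rule sum.swap)
    also have "\<dots> = (\<Sum>j\<in>?J. c / (rs * chi1 j) * (\<Sum>i\<in>?I. F i j * TT F i j)
        + c * rs / chi2 j * (\<Sum>i\<in>?I. G i j * TT G i j))"
      unfolding B_def by (simp add: sum.distrib sum_distrib_left)
    also have "\<dots> \<ge> 0"
    proof (rule sum_nonneg)
      fix j assume j: "j \<in> ?J"
      have t1: "(\<Sum>i\<in>?I. F i j * TT F i j) \<ge> 0"
        unfolding TT_def using transport_nonneg[OF N1 dvpos dxpos dtpos] by blast
      have t2: "(\<Sum>i\<in>?I. G i j * TT G i j) \<ge> 0"
        unfolding TT_def using transport_nonneg[OF N1 dvpos dxpos dtpos] by blast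
      have "chi1 j > 0" "chi2 j > 0" using chipos j by auto
      then show "0 \<le> c / (rs * chi1 j) * (\<Sum>i\<in>?I. F i j * TT F i j)
        + c * rs / chi2 j * (\<Sum>i\<in>?I. G i j * TT G i j)"
        using t1 t2 c rspos by (intro add_nonneg_nonneg mult_nonneg_nonneg) auto
    qed
    finally show ?thesis .
  qed
  have lowb: "(\<Sum>j\<in>?J. A i j) + (\<Sum>j\<in>?J. C i j) \<ge> aF i / (rs * dt) + bG i * rs / dt" for i
  proof -
    have eA: "(\<Sum>j\<in>?J. A i j) = ((1/dt + 1/rs) / rs) * aF i + ((1/dt + rs) * rs) * bG i"
      unfolding A_def aF_def bG_def by (simp only: sum.distrib sum_distrib_left)
    have eC: "(\<Sum>j\<in>?J. C i j) = 2 * p i * q i / dv"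
      unfolding C_def by (simp add: sum.distrib sum_distrib_left[symmetric] sp sq)
    have c1: "(p i)^2 \<le> dv * aF i" unfolding p_def aF_def
      using cs[of chi1 F i] chipos sum1 by auto
    have c2: "(q i)^2 \<le> dv * bG i" unfolding q_def bG_def
      using cs[of chi2 G i] chipos sum2 by auto
    have k: "aF i / rs^2 + bG i * rs^2 + 2 * p i * q i / dv \<ge> 0"
    proof -
      have "aF i / rs^2 \<ge> (p i)^2 / (dv * rs^2)"
        using c1 dvpos rspos by (simp add: field_simps)
      moreover have "bG i * rs^2 \<ge> (q i)^2 * rs^2 / dv"
        using c2 dvpos rspos by (simp add: field_simps)
      moreover have "(p i)^2 / (dv * rs^2) + (q i)^2 * rs^2 / dv + 2 * p i * q i / dv
          = (p i / rs + rs * q i)^2 / dv"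
        using dvpos rspos by (simp add: power2_eq_square field_simps)
      moreover have "(p i / rs + rs * q i)^2 / dv \<ge> 0" using dvpos by simp
      ultimately show ?thesis by linarith
    qed
    have "((1/dt + 1/rs) / rs) * aF i + ((1/dt + rs) * rs) * bG i
        = aF i / (rs * dt) + bG i * rs / dt + (aF i / rs^2 + bG i * rs^2)"
      using rspos dtpos by (simp add: power2_eq_square field_simps)
    then show ?thesis using eA eC k by linarith
  qed
  have nn: "aF i / (rs * dt) + bG i * rs / dt \<ge> 0" for i
    using aF0 bG0 rspos dtpos by simp
  have "(\<Sum>i\<in>?I. aF i / (rs * dt) + bG i * rs / dt) \<le> (\<Sum>i\<in>?I. (\<Sum>j\<in>?J. A i j) + (\<Sum>j\<in>?J. C i j))"
    using lowb by (rule sum_mono)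
  also have "\<dots> \<le> 0" using tot Bnn by linarith
  finally have le0: "(\<Sum>i\<in>?I. aF i / (rs * dt) + bG i * rs / dt) \<le> 0" .
  have z: "aF i / (rs * dt) + bG i * rs / dt = 0" if "i \<in> ?I" for i
  proof -
    have "(\<Sum>i\<in>?I. aF i / (rs * dt) + bG i * rs / dt) \<ge> 0"
      using nn by (intro sum_nonneg) auto
    then have "(\<Sum>i\<in>?I. aF i / (rs * dt) + bG i * rs / dt) = 0"
      using le0 by linarith
    from iffD1[OF sum_nonneg_eq_0_iff[OF finI nn] this] that show ?thesis by blast
  qed
  show ?thesis
  proof (intro ballI conjI)
    fix i j assume i: "i \<in> ?I" and j: "j \<in> ?J"
    have x1: "aF i / (rs * dt) \<ge> 0" using aF0[of i] rspos dtpos by simp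
    have x2: "bG i * rs / dt \<ge> 0" using bG0[of i] rspos dtpos by simp
    have "aF i / (rs * dt) = 0" "bG i * rs / dt = 0"
      using z[OF i] x1 x2 by linarith+
    then have a0: "aF i = 0" and b0: "bG i = 0" using rspos dtpos by auto
    have "(F i j)^2 / chi1 j = 0"
    proof -
      have "\<And>j. j \<in> ?J \<Longrightarrow> 0 \<le> (F i j)^2 / chi1 j" using chipos by auto
      from iffD1[OF sum_nonneg_eq_0_iff[OF finJ this] a0[unfolded aF_def]] j show ?thesis by blast
    qed
    then show "F i j = 0" using chipos j by auto
    have "(G i j)^2 / chi2 j = 0"
    proof -
      have "\<And>j. j \<in> ?J \<Longrightarrow> 0 \<le> (G i j)^2 / chi2 j" using chipos by auto
      from iffD1[OF sum_nonneg_eq_0_iff[OF finJ this] b0[unfolded bG_def]] j show ?thesis by blast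
    qed
    then show "G i j = 0" using chipos j by auto
  qed
qed

end

lemma sum_fun_apply: "(sum f A) x = (\<Sum>a\<in>A. f a x)"
  by (induction A rule: infinite_finite_induct) auto

context schm begin

definition sc :: "real \<Rightarrow> (bool \<Rightarrow> nat \<Rightarrow> int \<Rightarrow> real) \<Rightarrow> (bool \<Rightarrow> nat \<Rightarrow> int \<Rightarrow> real)" where
  "sc c w = (\<lambda>b i j. c * w b i j)"

lemma vs: "vector_space sc"
  by unfold_locales (auto simp: sc_def fun_eq_iff algebra_simps)

definition Op :: "(bool \<Rightarrow> nat \<Rightarrow> int \<Rightarrow> real) \<Rightarrow> (bool \<Rightarrow> nat \<Rightarrow> int \<Rightarrow> real)" where
  "Op w = (\<lambda>b i j. if i \<in> Icells N \<and> j \<in> Jcells L then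
      (if b then opF (w True) (w False) i j else opG (w True) (w False) i j) else 0)"

lemma TT_add: "TT (a + b) i j = TT a i j + TT b i j"
  unfolding TT_def flux_def by (simp add: algebra_simps add_divide_distrib)
lemma dens_add: "dens vstar L (a + b) i = dens vstar L a i + dens vstar L b i"
  unfolding dens_def by (simp add: sum.distrib algebra_simps)
lemma TT_scale: "TT (\<lambda>i j. c * a i j) i j = c * TT a i j"
  unfolding TT_def flux_def by (simp add: algebra_simps)
lemma dens_scale: "dens vstar L (\<lambda>i j. c * a i j) i = c * dens vstar L a i"
  unfolding dens_def by (simp add: sum_distrib_left algebra_simps)

lemma Op_add: "Op (x + y) = Op x + Op y"
  unfolding Op_def opF_def opG_def
  by (auto simp: fun_eq_iff TT_add dens_add algebra_simps add_divide_distrib)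

lemma Op_scale: "Op (sc c x) = sc c (Op x)"
proof -
  have a: "sc c x True = (\<lambda>i j. c * x True i j)" "sc c x False = (\<lambda>i j. c * x False i j)"
    unfolding sc_def by auto
  show ?thesis unfolding a Op_def opF_def opG_def
    by (auto simp: fun_eq_iff sc_def TT_scale dens_scale algebra_simps)
qed

lemma lin: "Vector_Spaces.linear sc sc Op"
  using vs Op_add Op_scale by (simp add: Vector_Spaces.linear_iff)

interpretation V: vector_space sc by (rule vs)

definition Vsp :: "(bool \<Rightarrow> nat \<Rightarrow> int \<Rightarrow> real) set" where
  "Vsp = {w. \<forall>b i j. \<not> (i \<in> Icells N \<and> j \<in> Jcells L) \<longrightarrow> w b i j = 0}"

definition delta :: "bool \<times> nat \<times> int \<Rightarrow> (bool \<Rightarrow> nat \<Rightarrow> int \<Rightarrow> real)" where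
  "delta k = (\<lambda>b i j. if k = (b, i, j) then 1 else 0)"

definition KK where "KK = (UNIV :: bool set) \<times> Icells N \<times> Jcells L"

lemma finKK: "finite KK" unfolding KK_def using finI finJ by simp

lemma span_eq: "V.span (delta ` KK) = Vsp"
proof
  have sub: "V.subspace Vsp"
    unfolding V.subspace_def Vsp_def sc_def by auto
  have "delta ` KK \<subseteq> Vsp" unfolding Vsp_def delta_def KK_def by auto
  then show "V.span (delta ` KK) \<subseteq> Vsp" using V.span_minimal sub by blast
next
  show "Vsp \<subseteq> V.span (delta ` KK)"
  proof
    fix w assume w: "w \<in> Vsp"
    have eq: "w = (\<Sum>k\<in>KK. sc (w (fst k) (fst (snd k)) (snd (snd k))) (delta k))"
    proof (intro ext)
      fix b i j
      have "(\<Sum>k\<in>KK. sc (w (fst k) (fst (snd k)) (snd (snd k))) (delta k)) b i j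
          = (\<Sum>k\<in>KK. (if k = (b, i, j) then w (fst k) (fst (snd k)) (snd (snd k)) else 0))"
        by (simp add: sum_fun_apply sc_def delta_def if_distrib cong: if_cong)
      also have "\<dots> = (if (b, i, j) \<in> KK then w b i j else 0)"
        using sum.delta[OF finKK, of "(b, i, j)" "\<lambda>k. w (fst k) (fst (snd k)) (snd (snd k))"] by simp
      also have "\<dots> = w b i j" using w unfolding Vsp_def KK_def by auto
      finally show "w b i j = (\<Sum>k\<in>KK. sc (w (fst k) (fst (snd k)) (snd (snd k))) (delta k)) b i j" by simp
    qed
    have "(\<Sum>k\<in>KK. sc (w (fst k) (fst (snd k)) (snd (snd k))) (delta k)) \<in> V.span (delta ` KK)"
      by (intro V.span_sum V.span_scale V.span_base) auto
    then show "w \<in> V.span (delta ` KK)" using eq by simp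
  qed
qed

lemma Op_Vsp: "Op ` Vsp \<subseteq> Vsp" unfolding Op_def Vsp_def by auto

end

context schm begin
interpretation V: vector_space sc by (rule vs)
lemma Op_inj: "inj_on Op Vsp"
proof (rule inj_onI)
  fix x y assume x: "x \<in> Vsp" and y: "y \<in> Vsp" and e: "Op x = Op y"
  have a: "Op (x - y) + Op y = Op x" using Op_add[of "x - y" y] by simp
  have z: "Op (x - y) = 0" using a e by (metis add_cancel_left_left)
  let ?w = "x - y"
  have zz: "Op ?w b i j = 0" for b i j using z by simp
  have "\<forall>i\<in>Icells N. \<forall>j\<in>Jcells L. opF (?w True) (?w False) i j = 0 \<and> opG (?w True) (?w False) i j = 0"
  proof (intro ballI conjI)
    fix i j assume ij: "i \<in> Icells N" "j \<in> Jcells L"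
    show "opF (?w True) (?w False) i j = 0" using zz[of True i j] ij unfolding Op_def by simp
    show "opG (?w True) (?w False) i j = 0" using zz[of False i j] ij unfolding Op_def by simp
  qed
  note en = energy[OF this]
  show "x = y"
  proof (intro ext)
    fix b i j
    show "x b i j = y b i j"
    proof (cases "i \<in> Icells N \<and> j \<in> Jcells L")
      case True
      then have "?w True i j = 0 \<and> ?w False i j = 0" using en by blast
      then have "?w b i j = 0" by (cases b) simp_all
      then show ?thesis by simp
    next
      case False
      have "x b i j = 0" using x False unfolding Vsp_def by blast
      moreover have "y b i j = 0" using y False unfolding Vsp_def by blast
      ultimately show ?thesis by simp
    qed
  qed
qed

lemma Op_surj:
  assumes r: "r \<in> Vsp" shows "\<exists>w\<in>Vsp. Op w = r"
proof -
  have "V.span (delta ` KK) \<subseteq> Op ` V.span (delta ` KK)"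
    by (rule V.inj_on_span_imp_surj[OF finite_imageI[OF finKK] lin])
       (simp_all only: span_eq Op_Vsp Op_inj)
  then have "Vsp \<subseteq> Op ` Vsp" by (simp only: span_eq)
  then show ?thesis using r by blast
qed

end

context schm begin

definition restr :: "(bool \<Rightarrow> nat \<Rightarrow> int \<Rightarrow> real) \<Rightarrow> (bool \<Rightarrow> nat \<Rightarrow> int \<Rightarrow> real)" where
  "restr w = (\<lambda>b i j. if i \<in> Icells N \<and> j \<in> Jcells L then w b i j else 0)"
definition rhs :: "(bool \<Rightarrow> nat \<Rightarrow> int \<Rightarrow> real) \<Rightarrow> (bool \<Rightarrow> nat \<Rightarrow> int \<Rightarrow> real)" where
  "rhs w = (\<lambda>b i j. if i \<in> Icells N \<and> j \<in> Jcells L then w b i j / dt else 0)"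
definition stp :: "(bool \<Rightarrow> nat \<Rightarrow> int \<Rightarrow> real) \<Rightarrow> (bool \<Rightarrow> nat \<Rightarrow> int \<Rightarrow> real)" where
  "stp w = (SOME u. u \<in> Vsp \<and> Op u = rhs w)"

lemma rhs_Vsp: "rhs w \<in> Vsp" unfolding rhs_def Vsp_def by auto
lemma restr_Vsp: "restr w \<in> Vsp" unfolding restr_def Vsp_def by auto

lemma stp: "stp w \<in> Vsp \<and> Op (stp w) = rhs w"
proof -
  have "\<exists>u. u \<in> Vsp \<and> Op u = rhs w" using Op_surj[OF rhs_Vsp[of w]] by blast
  from someI_ex[OF this] show ?thesis unfolding stp_def .
qed

lemma mod_in: "x mod N \<in> Icells N" unfolding Icells_def using N1 by simp

lemma TT_restr:
  assumes "i \<in> Icells N" "j \<in> Jcells L"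
  shows "TT (\<lambda>i j. if i \<in> Icells N \<and> j \<in> Jcells L then h i j else 0) i j = TT h i j"
proof -
  have "imin N i \<in> Icells N" unfolding imin_def by (rule mod_in)
  then show ?thesis using assms mod_in unfolding TT_def flux_def by simp
qed

lemma dens_restr:
  assumes "i \<in> Icells N"
  shows "dens vstar L (\<lambda>i j. if i \<in> Icells N \<and> j \<in> Jcells L then h i j else 0) i = dens vstar L h i"
  unfolding dens_def using assms by (intro sum.cong) auto

lemma Op_restr:
  assumes "i \<in> Icells N" "j \<in> Jcells L"
  shows "Op (restr u) b i j = Op u b i j"
proof -
  have a: "restr u True = (\<lambda>i j. if i \<in> Icells N \<and> j \<in> Jcells L then u True i j else 0)"
          "restr u False = (\<lambda>i j. if i \<in> Icells N \<and> j \<in> Jcells L then u False i j else 0)"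
    unfolding restr_def by auto
  show ?thesis unfolding Op_def opF_def opG_def a
    using assms TT_restr[OF assms] dens_restr[OF assms(1)] by simp
qed

lemma eqF:
  "((F' i j - Fn i j) / dt + (1 / (dx * dv)) *
      (flux N L vstar dx dt F' i j - flux N L vstar dx dt F' (imin N i) j)
    = - rs * chi1 j * dens vstar L G' i - (1 / rs) * F' i j)
   \<longleftrightarrow> opF F' G' i j = Fn i j / dt"
  unfolding opF_def TT_def diff_divide_distrib by (auto simp: algebra_simps)

lemma eqG:
  "((G' i j - Gn i j) / dt + (1 / (dx * dv)) *
      (flux N L vstar dx dt G' i j - flux N L vstar dx dt G' (imin N i) j)
    = - (1 / rs) * chi2 j * dens vstar L F' i - rs * G' i j)
   \<longleftrightarrow> opG F' G' i j = Gn i j / dt"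
  unfolding opG_def TT_def diff_divide_distrib by (auto simp: algebra_simps)

end

theorem corollary4p2:
  fixes N L :: nat and vstar dx dt rs :: real
    and chi1 chi2 :: "int \<Rightarrow> real"
    and f0 g0 :: "nat \<Rightarrow> int \<Rightarrow> real"
  assumes "N \<ge> 1" and "L \<ge> 1" and "vstar > 0" and "dx > 0" and "dt > 0" and "rs > 0"
    and "\<forall>j\<in>Jcells L. chi1 j > 0 \<and> chi2 j > 0"
    and "\<forall>j\<in>Jcells L. chi1 j = chi1 (1 - j) \<and> chi2 j = chi2 (1 - j)"
    and "(\<Sum>j\<in>Jcells L. dvel vstar L * chi1 j) = 1"
    and "(\<Sum>j\<in>Jcells L. dvel vstar L * chi2 j) = 1"
  shows "\<exists>f g. (\<forall>i\<in>Icells N. \<forall>j\<in>Jcells L. f 0 i j = f0 i j \<and> g 0 i j = g0 i j)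
           \<and> lin_scheme N L vstar dx dt chi1 chi2 rs f g
           \<and> (\<forall>f' g'. (\<forall>i\<in>Icells N. \<forall>j\<in>Jcells L. f' 0 i j = f0 i j \<and> g' 0 i j = g0 i j)
                  \<and> lin_scheme N L vstar dx dt chi1 chi2 rs f' g'
                  \<longrightarrow> (\<forall>n. \<forall>i\<in>Icells N. \<forall>j\<in>Jcells L. f' n i j = f n i j \<and> g' n i j = g n i j))"
proof -
  interpret S: schm N L vstar dx dt rs chi1 chi2
    using assms(1-7,9,10) by unfold_locales auto
  define w0 :: "bool \<Rightarrow> nat \<Rightarrow> int \<Rightarrow> real" where "w0 = (\<lambda>b. if b then f0 else g0)"
  define s where "s n = (S.stp ^^ n) (S.restr w0)" for n
  have s0: "s 0 = S.restr w0" unfolding s_def by simp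
  have sS: "s (Suc n) = S.stp (s n)" for n unfolding s_def by simp
  define f where "f n = s n True" for n
  define g where "g n = s n False" for n
  have init: "\<forall>i\<in>Icells N. \<forall>j\<in>Jcells L. f 0 i j = f0 i j \<and> g 0 i j = g0 i j"
    unfolding f_def g_def s0 S.restr_def w0_def by simp
  have Opn: "S.Op (s (Suc n)) = S.rhs (s n)" for n using S.stp sS by simp
  have sch: "lin_scheme N L vstar dx dt chi1 chi2 rs f g"
    unfolding lin_scheme_def
  proof (intro allI ballI conjI)
    fix n i j assume i: "i \<in> Icells N" and j: "j \<in> Jcells L"
    have e1: "S.Op (s (Suc n)) True i j = S.rhs (s n) True i j" using Opn by simp
    have e2: "S.Op (s (Suc n)) False i j = S.rhs (s n) False i j" using Opn by simp
    have o1: "S.opF (f (Suc n)) (g (Suc n)) i j = f n i j / dt"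
      using e1 i j unfolding S.Op_def S.rhs_def f_def g_def by simp
    have o2: "S.opG (f (Suc n)) (g (Suc n)) i j = g n i j / dt"
      using e2 i j unfolding S.Op_def S.rhs_def f_def g_def by simp
    show "(f (Suc n) i j - f n i j) / dt + 1 / (dx * dvel vstar L) *
        (flux N L vstar dx dt (f (Suc n)) i j - flux N L vstar dx dt (f (Suc n)) (imin N i) j) =
        - rs * chi1 j * dens vstar L (g (Suc n)) i - 1 / rs * f (Suc n) i j"
      using S.eqF o1 by blast
    show "(g (Suc n) i j - g n i j) / dt + 1 / (dx * dvel vstar L) *
        (flux N L vstar dx dt (g (Suc n)) i j - flux N L vstar dx dt (g (Suc n)) (imin N i) j) =
        - (1 / rs) * chi2 j * dens vstar L (f (Suc n)) i - rs * g (Suc n) i j"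
      using S.eqG o2 by blast
  qed
  have uniq: "\<forall>n. \<forall>i\<in>Icells N. \<forall>j\<in>Jcells L. f' n i j = f n i j \<and> g' n i j = g n i j"
    if init': "\<forall>i\<in>Icells N. \<forall>j\<in>Jcells L. f' 0 i j = f0 i j \<and> g' 0 i j = g0 i j"
      and sch': "lin_scheme N L vstar dx dt chi1 chi2 rs f' g'" for f' g'
  proof -
    define w' where "w' n = S.restr (\<lambda>b. if b then f' n else g' n)" for n
    have "w' n = s n" for n
    proof (induction n)
      case 0
      show ?case unfolding w'_def s0 S.restr_def w0_def
        using init' by (auto simp: fun_eq_iff)
    next
      case (Suc n)
      have Vs: "w' (Suc n) \<in> S.Vsp" unfolding w'_def by (rule S.restr_Vsp)
      have "S.Op (w' (Suc n)) = S.rhs (w' n)"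
      proof (intro ext)
        fix b i j
        show "S.Op (w' (Suc n)) b i j = S.rhs (w' n) b i j"
        proof (cases "i \<in> Icells N \<and> j \<in> Jcells L")
          case True
          then have i: "i \<in> Icells N" and j: "j \<in> Jcells L" by auto
          have q1: "S.opF (f' (Suc n)) (g' (Suc n)) i j = f' n i j / dt"
            using sch' i j S.eqF unfolding lin_scheme_def by blast
          have q2: "S.opG (f' (Suc n)) (g' (Suc n)) i j = g' n i j / dt"
            using sch' i j S.eqG unfolding lin_scheme_def by blast
          have "S.Op (w' (Suc n)) b i j = S.Op (\<lambda>b. if b then f' (Suc n) else g' (Suc n)) b i j"
            unfolding w'_def using S.Op_restr[OF i j] by blast
          also have "\<dots> = S.rhs (w' n) b i j"
            using q1 q2 i j unfolding S.Op_def S.rhs_def w'_def S.restr_def by (cases b) auto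
          finally show ?thesis .
        next
          case False
          then show ?thesis unfolding S.Op_def S.rhs_def by auto
        qed
      qed
      also have "\<dots> = S.Op (s (Suc n))" using Suc Opn by simp
      finally have "S.Op (w' (Suc n)) = S.Op (s (Suc n))" .
      moreover have "s (Suc n) \<in> S.Vsp" using S.stp sS by simp
      ultimately show ?case using S.Op_inj Vs by (meson inj_onD)
    qed
    note ws = this
    show ?thesis
    proof (intro allI ballI conjI)
      fix n i j assume i: "i \<in> Icells N" and j: "j \<in> Jcells L"
      have "w' n True i j = s n True i j" "w' n False i j = s n False i j" using ws by simp_all
      then show "f' n i j = f n i j" "g' n i j = g n i j"
        unfolding f_def g_def w'_def S.restr_def using i j by simp_all
    qed
  qed
  show ?thesis using init sch uniq by blast
qed

end
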